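(* Let ${\bf c}=(c_1,\ldots,c_{n+1})$ be a tuple of nonnegative integers, let $\Pi_{n+1}({\bf c})$ be the graph on $[n+2]$ consisting of the path $1\to2\to\cdots\to n+2$ together with $c_i$ additional edges $(i,n+2)$ for each $i=1,\ldots,n+1$, and let ${\bf a}=(a_1,\ldots,a_{n+1},-\sum_i a_i)$ with $a_i\in\mathbb{Z}_{\ge0}$. Then the Ehrhart polynomial $t\mapsto\#\big(t\,\mathcal{F}_{\Pi_{n+1}({\bf c})}({\bf a})\cap\mathbb{Z}^{E}\big)=K_{\Pi_{n+1}({\bf c})}(t{\bf a})$ has positive coefficients.
   Context: $\mathcal{F}_H({\bf a})$ is the set of $f\in\mathbb{R}_{\ge0}^{E(H)}$ with outflow minus inflow at each vertex $k$ (other than the last) equal to $a_k$; $K_H({\bf a})$ is the number of its integer points, and $E=E(\Pi_{n+1}({\bf c}))$. *)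

theory Defs
  imports "HOL-Computational_Algebra.Polynomial"
begin

text \<open>A directed multigraph H on vertex set [N] = {1..N} is given by a finite set of
edge labels E together with tail and head maps.\<close>

definition netflow :: "'e set \<Rightarrow> ('e \<Rightarrow> nat) \<Rightarrow> ('e \<Rightarrow> nat) \<Rightarrow> ('e \<Rightarrow> int) \<Rightarrow> nat \<Rightarrow> int" where
  "netflow E tail head f k = (\<Sum>e\<in>{e\<in>E. tail e = k}. f e) - (\<Sum>e\<in>{e\<in>E. head e = k}. f e)"

definition integer_flows ::
  "'e set \<Rightarrow> ('e \<Rightarrow> nat) \<Rightarrow> ('e \<Rightarrow> nat) \<Rightarrow> nat \<Rightarrow> (nat \<Rightarrow> int) \<Rightarrow> ('e \<Rightarrow> int) set" where
  "integer_flows E tail head N a =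
     {f. (\<forall>e. e \<notin> E \<longrightarrow> f e = 0) \<and> (\<forall>e\<in>E. 0 \<le> f e) \<and>
         (\<forall>k\<in>{1..<N}. netflow E tail head f k = a k)}"

definition K_flow :: "'e set \<Rightarrow> ('e \<Rightarrow> nat) \<Rightarrow> ('e \<Rightarrow> nat) \<Rightarrow> nat \<Rightarrow> (nat \<Rightarrow> int) \<Rightarrow> nat" where
  "K_flow E tail head N a = card (integer_flows E tail head N a)"

text \<open>The graph Pi_{n+1}(c) on [n+2]: path edges PathE i = (i, i+1) for i = 1..n+1, and
for each i = 1..n+1 the c i extra edges ExtraE i j = (i, n+2), j < c i.\<close>

datatype pedge = PathE nat | ExtraE nat nat

definition Pi_edges :: "nat \<Rightarrow> (nat \<Rightarrow> nat) \<Rightarrow> pedge set" where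
  "Pi_edges n c = PathE ` {1..n+1} \<union> {ExtraE i j | i j. i \<in> {1..n+1} \<and> j < c i}"

fun Pi_tail :: "pedge \<Rightarrow> nat" where
  "Pi_tail (PathE i) = i"
| "Pi_tail (ExtraE i j) = i"

fun Pi_head :: "nat \<Rightarrow> pedge \<Rightarrow> nat" where
  "Pi_head n (PathE i) = i + 1"
| "Pi_head n (ExtraE i j) = n + 2"

end

theory Submission
  imports Defs "HOL-Computational_Algebra.Formal_Power_Series"
begin

definition mc :: "nat \<Rightarrow> nat \<Rightarrow> nat" where "mc u r = (u + r - 1) choose r"

lemma mc_real: "real (mc u r) = (-1)^r * ((- real u) gchoose r)"
proof (cases "u = 0 \<and> r = 0")
  case True then show ?thesis by (simp add: mc_def)
next
  case False
  have "((- real u) gchoose r) = (-1)^r * ((real r - (- real u) - 1) gchoose r)"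
    by (rule gbinomial_negated_upper)
  also have "real r - (- real u) - 1 = real (u + r - 1)" using False by auto
  finally have "((- real u) gchoose r) = (-1)^r * real (mc u r)"
    by (simp add: mc_def binomial_gbinomial)
  then show ?thesis by (simp add: power_mult_distrib[symmetric])
qed

lemma mc_vandermonde: "(\<Sum>k\<le>n. mc u k * mc v (n - k)) = mc (u + v) n"
proof -
  have "real (\<Sum>k\<le>n. mc u k * mc v (n - k)) = (\<Sum>k\<le>n. (-1)^n * (((- real u) gchoose k) * ((- real v) gchoose (n - k))))"
    unfolding of_nat_sum of_nat_mult mc_real
  proof (rule sum.cong)
    fix k assume "k \<in> {..n}"
    then have "(-1::real)^k * (-1)^(n-k) = (-1)^n" by (simp add: power_add[symmetric])
    then show "(-1)^k * (- real u gchoose k) * ((-1)^(n-k) * (- real v gchoose (n - k))) = (-1)^n * ((- real u gchoose k) * (- real v gchoose (n - k)))"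
      by (metis (no_types, lifting) mult.assoc mult.left_commute)
  qed simp
  also have "\<dots> = (-1)^n * ((- real u - real v) gchoose n)"
    using gbinomial_Vandermonde[of "- real u" "- real v" n]
    by (simp add: sum_distrib_left[symmetric] atLeast0AtMost)
  also have "\<dots> = real (mc (u+v) n)" by (simp add: mc_real)
  finally show ?thesis by linarith
qed

lemma mc_1 [simp]: "mc 1 r = 1" by (simp add: mc_def)
lemma mc_Suc0 [simp]: "mc (Suc 0) r = 1" by (simp add: mc_def)
lemma mc_0: "mc 0 r = (if r = 0 then 1 else 0)" by (simp add: mc_def)
lemma mc_swap: "mc (p+1) q = mc (q+1) p"
proof -
  have "mc (p+1) q = (p+q) choose q" by (simp add: mc_def)
  also have "\<dots> = (p+q) choose p" using binomial_symmetric[of q "p+q"] by simp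
  also have "\<dots> = mc (q+1) p" by (simp add: mc_def add.commute)
  finally show ?thesis .
qed

definition sb :: "'e set \<Rightarrow> int \<Rightarrow> ('e \<Rightarrow> int) set" where
  "sb A m = {h. (\<forall>e. e \<notin> A \<longrightarrow> h e = 0) \<and> (\<forall>e\<in>A. 0 \<le> h e) \<and> sum h A = m}"

lemma sb_card: "finite A \<Longrightarrow> finite (sb A (int m)) \<and> card (sb A (int m)) = mc (card A) m"
proof (induction A arbitrary: m rule: finite_induct)
  case empty
  show ?case
  proof (cases "m = 0")
    case True
    have h: "sb {} (int m) = {\<lambda>_. 0}" using True by (auto simp: sb_def)
    show ?thesis unfolding h using True by (simp add: mc_0)
  next
    case False
    have h: "sb {} (int m) = {}" using False by (auto simp: sb_def)
    show ?thesis unfolding h using False by (simp add: mc_0)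
  qed
next
  case (insert e A)
  let ?U = "\<lambda>y. (\<lambda>h. h(e := int y)) ` sb A (int (m - y))"
  have eq: "sb (insert e A) (int m) = (\<Union>y\<in>{..m}. ?U y)"
  proof
    show "sb (insert e A) (int m) \<subseteq> (\<Union>y\<in>{..m}. ?U y)"
    proof
      fix h assume h: "h \<in> sb (insert e A) (int m)"
      then have s: "h e + sum h A = int m" and nn: "\<forall>x\<in>A. 0 \<le> h x" "0 \<le> h e"
        and z: "\<forall>x. x \<notin> insert e A \<longrightarrow> h x = 0"
        using insert by (auto simp: sb_def)
      have "sum h A \<ge> 0" using nn by (auto intro: sum_nonneg)
      then have le: "nat (h e) \<le> m" using s by linarith
      have sA: "sum (h(e := 0)) A = sum h A" using insert by (intro sum.cong) auto
      have "h(e := 0) \<in> sb A (int (m - nat (h e)))"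
        unfolding sb_def using sA s nn z le insert(2) by auto
      moreover have "h = (h(e := 0))(e := int (nat (h e)))" using nn by auto
      ultimately show "h \<in> (\<Union>y\<in>{..m}. ?U y)" using le by blast
    qed
  next
    show "(\<Union>y\<in>{..m}. ?U y) \<subseteq> sb (insert e A) (int m)"
    proof
      fix h assume "h \<in> (\<Union>y\<in>{..m}. ?U y)"
      then obtain y g where y: "y \<in> {..m}" and g: "g \<in> sb A (int (m - y))" and hg: "h = g(e := int y)"
        by blast
      have sA: "sum (g(e := int y)) A = sum g A" using insert by (intro sum.cong) auto
      show "h \<in> sb (insert e A) (int m)"
        unfolding hg using g y sA insert by (auto simp: sb_def)
    qed
  qed
  have inj: "inj_on (\<lambda>h. h(e := int y)) (sb A (int (m - y)))" for y
  proof (rule inj_onI)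
    fix g1 g2 assume a: "g1 \<in> sb A (int (m - y))" "g2 \<in> sb A (int (m - y))" and b: "g1(e := int y) = g2(e := int y)"
    have "g1 e = 0" "g2 e = 0" using a insert(2) unfolding sb_def by auto
    show "g1 = g2"
    proof
      fix x show "g1 x = g2 x"
        using fun_cong[OF b, of x] \<open>g1 e = 0\<close> \<open>g2 e = 0\<close> by (cases "x = e") auto
    qed
  qed
  have fin: "finite (?U y)" for y using insert.IH by auto
  have disj: "\<forall>y1\<in>{..m}. \<forall>y2\<in>{..m}. y1 \<noteq> y2 \<longrightarrow> ?U y1 \<inter> ?U y2 = {}"
  proof (intro ballI impI)
    fix y1 y2 :: nat assume "y1 \<noteq> y2"
    show "?U y1 \<inter> ?U y2 = {}"
    proof (rule ccontr)
      assume "?U y1 \<inter> ?U y2 \<noteq> {}"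
      then obtain g1 g2 where "g1(e := int y1) = g2(e := int y2)" by blast
      from fun_cong[OF this, of e] have "y1 = y2" by simp
      then show False using \<open>y1 \<noteq> y2\<close> by simp
    qed
  qed
  have "card (sb (insert e A) (int m)) = (\<Sum>y\<le>m. card (?U y))"
    unfolding eq by (rule card_UN_disjoint[OF finite_atMost]) (use fin disj in blast)+
  also have "\<dots> = (\<Sum>y\<le>m. mc 1 y * mc (card A) (m - y))"
  proof (rule sum.cong[OF refl])
    fix y assume "y \<in> {..m}"
    show "card (?U y) = mc 1 y * mc (card A) (m - y)"
      using card_image[OF inj[of y]] insert.IH[of "m - y"] by simp
  qed
  also have "\<dots> = mc (card (insert e A)) m"
    using mc_vandermonde[where u=1 and v="card A" and n=m] insert by simp
  finally show ?case unfolding eq using fin by (intro conjI finite_UN_I finite_atMost) blast+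
qed

definition mp :: "nat \<Rightarrow> nat \<Rightarrow> real poly" where
  "mp a r = smult (1 / fact r) (\<Prod>j\<in>{0..<r}. [:of_nat j, of_nat a:])"

lemma mc_poch: "real (mc u r) = pochhammer (real u) r / fact r"
proof (cases "u = 0 \<and> r = 0")
  case True then show ?thesis by (simp add: mc_def)
next
  case False
  have "real (mc u r) = (real (u + r - 1) gchoose r)" by (simp add: mc_def binomial_gbinomial)
  also have "\<dots> = pochhammer (real (u + r - 1) - real r + 1) r / fact r" by (rule gbinomial_pochhammer')
  also have "real (u + r - 1) - real r + 1 = real u" using False by auto
  finally show ?thesis .
qed

lemma mp_poly: "poly (mp a r) (real t) = real (mc (t*a) r)"
  by (simp add: mp_def poly_prod mc_poch pochhammer_prod add.commute mult.commute)

definition nn :: "real poly \<Rightarrow> bool" where "nn p = (\<forall>i. 0 \<le> coeff p i)"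

lemma nn_add: "nn p \<Longrightarrow> nn q \<Longrightarrow> nn (p + q)" by (simp add: nn_def)
lemma nn_mult: "nn p \<Longrightarrow> nn q \<Longrightarrow> nn (p * q)"
  by (auto simp: nn_def coeff_mult intro!: sum_nonneg)
lemma nn_0: "nn 0" by (simp add: nn_def)
lemma nn_1: "nn 1" by (simp add: nn_def coeff_1)
lemma nn_sum: "(\<And>x. x \<in> A \<Longrightarrow> nn (f x)) \<Longrightarrow> nn (sum f A)"
  by (auto simp: nn_def coeff_sum intro!: sum_nonneg)
lemma nn_prod: "(\<And>x. x \<in> A \<Longrightarrow> nn (f x)) \<Longrightarrow> nn (prod f A)"
proof (induction A rule: infinite_finite_induct)
  case (insert x F) then show ?case by (auto intro: nn_mult)
qed (auto simp: nn_1)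
lemma nn_smult: "0 \<le> c \<Longrightarrow> nn p \<Longrightarrow> nn (smult c p)" by (simp add: nn_def)
lemma nn_coeff: "nn p \<Longrightarrow> 0 \<le> coeff p i" by (simp add: nn_def)

lemma mp_nn: "nn (mp a r)"
proof -
  have "nn (\<Prod>j\<in>{0..<r}. [:of_nat j, of_nat a:])"
    by (rule nn_prod) (auto simp: nn_def coeff_pCons split: nat.splits)
  then show ?thesis unfolding mp_def by (intro nn_smult) auto
qed

lemma mp_a0: "mp 0 r = (if r = 0 then 1 else 0)"
proof (cases r)
  case (Suc m)
  then have "0 \<in> {0..<r}" by simp
  then have "(\<Prod>j\<in>{0..<r}. [:of_nat j, of_nat 0:] :: real poly) = 0"
    by (intro prod_zero) auto
  then show ?thesis using Suc by (simp add: mp_def)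
qed (simp add: mp_def)

lemma mp_deg: assumes "a > 0" shows "degree (mp a r) = r" "coeff (mp a r) r > 0"
proof -
  have nz: "\<forall>j\<in>{0..<r}. ([:of_nat j, of_nat a:] :: real poly) \<noteq> 0" using assms by auto
  have d: "degree (\<Prod>j\<in>{0..<r}. [:of_nat j, of_nat a:] :: real poly) = r"
    using degree_prod_eq_sum_degree[OF nz] assms by simp
  then show "degree (mp a r) = r" by (simp add: mp_def)
  have "lead_coeff (\<Prod>j\<in>{0..<r}. [:of_nat j, of_nat a:] :: real poly) = real a ^ r"
    using assms by (simp add: lead_coeff_prod)
  then have "coeff (\<Prod>j\<in>{0..<r}. [:of_nat j, of_nat a:] :: real poly) r = real a ^ r" using d by simp
  then show "coeff (mp a r) r > 0" using assms by (simp add: mp_def)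
qed

definition Inv :: "(nat \<Rightarrow> real poly) \<Rightarrow> nat \<Rightarrow> nat \<Rightarrow> bool" where
"Inv \<beta> m D \<longleftrightarrow> (\<forall>l. nn (\<beta> l)) \<and> (\<forall>l>m. \<beta> l = 0) \<and> (\<forall>l\<le>m. degree (\<beta> l) \<le> m - l) \<and> D \<le> m
   \<and> (\<forall>l. degree (\<beta> l) \<le> D) \<and> (\<forall>j\<le>D. coeff (\<beta> (m-j)) j > 0)"

definition stepb :: "(nat \<Rightarrow> real poly) \<Rightarrow> nat \<Rightarrow> nat \<Rightarrow> nat \<Rightarrow> nat \<Rightarrow> real poly" where
"stepb \<beta> m c a l = (\<Sum>i\<le>m. if l \<le> c + i then \<beta> i * mp a (c + i - l) else 0)"

lemma stepb_a0: "stepb \<beta> m c 0 l = (if c \<le> l \<and> l - c \<le> m then \<beta> (l - c) else 0)"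
proof -
  have "stepb \<beta> m c 0 l = (\<Sum>i\<le>m. if i = l - c \<and> c \<le> l then \<beta> i else 0)"
    unfolding stepb_def by (rule sum.cong) (auto simp: mp_a0)
  also have "\<dots> = (if c \<le> l \<and> l - c \<le> m then \<beta> (l - c) else 0)"
    by (cases "c \<le> l") (auto simp: sum.delta')
  finally show ?thesis .
qed

lemma Inv_step0: assumes "Inv \<beta> m D" shows "Inv (stepb \<beta> m c 0) (m + c) D"
  using assms unfolding Inv_def stepb_a0
  apply (intro conjI)
  by (auto simp: nn_0)

lemma Inv_step1: assumes "Inv \<beta> m D" and "a > 0" shows "Inv (stepb \<beta> m c a) (m + c) (m + c)"
proof -
  note I = assms(1)[unfolded Inv_def]
  have nn1: "nn (stepb \<beta> m c a l)" for l
    unfolding stepb_def using I by (auto intro!: nn_sum nn_mult mp_nn simp: nn_0)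
  have z: "stepb \<beta> m c a l = 0" if "l > m + c" for l
    unfolding stepb_def using that by (intro sum.neutral) auto
  have dg: "degree (stepb \<beta> m c a l) \<le> m + c - l" for l
    unfolding stepb_def
  proof (rule degree_sum_le)
    fix i assume i: "i \<in> {..m}"
    show "degree (if l \<le> c + i then \<beta> i * mp a (c + i - l) else 0) \<le> m + c - l"
    proof (cases "l \<le> c + i")
      case True
      have "degree (\<beta> i * mp a (c + i - l)) \<le> degree (\<beta> i) + degree (mp a (c + i - l))"
        by (rule degree_mult_le)
      also have "\<dots> \<le> (m - i) + (c + i - l)" using I i mp_deg[OF assms(2)] by auto
      also have "\<dots> = m + c - l" using i True by auto
      finally show ?thesis using True by simp
    qed simp
  qed simp
  have pos: "coeff (stepb \<beta> m c a (m + c - j)) j > 0" if j: "j \<le> m + c" for j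
  proof -
    define j' where "j' = min j D"
    define i0 where "i0 = m - j'"
    have j'D: "j' \<le> D" "j' \<le> j" "j' \<le> m" using I by (auto simp: j'_def)
    have cpos: "coeff (\<beta> i0) j' > 0" using I j'D by (auto simp: i0_def)
    have dle: "degree (\<beta> i0) \<le> j'" using I j'D unfolding i0_def
      by (metis diff_diff_cancel diff_le_self)
    have deq: "degree (\<beta> i0) = j'"
      using dle cpos le_degree[of "\<beta> i0" j'] by fastforce
    have cond: "m + c - j \<le> c + i0" using j'D j by (auto simp: i0_def)
    have rr: "c + i0 - (m + c - j) = j - j'" using j'D j by (auto simp: i0_def)
    have "coeff (\<beta> i0 * mp a (j - j')) j = coeff (\<beta> i0) j' * coeff (mp a (j - j')) (j - j')"
      using coeff_mult_degree_sum[of "\<beta> i0" "mp a (j - j')"] deq mp_deg[OF assms(2)] j'D by simp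
    also have "\<dots> > 0" using cpos mp_deg[OF assms(2)] by simp
    finally have t0: "coeff (if m + c - j \<le> c + i0 then \<beta> i0 * mp a (c + i0 - (m + c - j)) else 0) j > 0"
      using cond rr by simp
    have "coeff (if m + c - j \<le> c + i0 then \<beta> i0 * mp a (c + i0 - (m + c - j)) else 0) j
       \<le> (\<Sum>i\<le>m. coeff (if m + c - j \<le> c + i then \<beta> i * mp a (c + i - (m + c - j)) else 0) j)"
      by (rule member_le_sum) (use I in \<open>auto simp: i0_def intro!: nn_coeff nn_mult mp_nn\<close>)
    also have "\<dots> = coeff (stepb \<beta> m c a (m + c - j)) j" by (simp add: stepb_def coeff_sum)
    finally show ?thesis using t0 by linarith
  qed
  show ?thesis unfolding Inv_def
    using nn1 z dg pos by (auto intro: order.trans[OF dg])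
qed

lemma Inv_step: "Inv \<beta> m D \<Longrightarrow> \<exists>D'. Inv (stepb \<beta> m c a) (m + c) D'"
  by (cases "a = 0") (auto intro: Inv_step0 Inv_step1)

lemma Inv_final: assumes "Inv \<beta> m D" shows "\<forall>i \<le> degree (\<Sum>l\<le>m. \<beta> l). coeff (\<Sum>l\<le>m. \<beta> l) i > 0"
proof (intro allI impI)
  fix i assume i: "i \<le> degree (\<Sum>l\<le>m. \<beta> l)"
  note I = assms[unfolded Inv_def]
  have "degree (\<Sum>l\<le>m. \<beta> l) \<le> D" using I by (intro degree_sum_le) auto
  then have iD: "i \<le> D" using i by simp
  have "coeff (\<beta> (m - i)) i \<le> (\<Sum>l\<le>m. coeff (\<beta> l) i)"
    by (rule member_le_sum) (use I in \<open>auto intro: nn_coeff\<close>)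
  then show "coeff (\<Sum>l\<le>m. \<beta> l) i > 0" using I iD by (simp add: coeff_sum) (meson order_less_le_trans)
qed

definition ex :: "(nat \<Rightarrow> nat) \<Rightarrow> nat \<Rightarrow> pedge set" where "ex c k = ExtraE k ` {..<c k}"
definition Eg :: "nat \<Rightarrow> (nat \<Rightarrow> nat) \<Rightarrow> nat \<Rightarrow> pedge set" where
  "Eg n c k = {e \<in> Pi_edges n c. Pi_tail e \<ge> k}"
definition outs :: "(nat \<Rightarrow> nat) \<Rightarrow> (pedge \<Rightarrow> int) \<Rightarrow> nat \<Rightarrow> int" where
  "outs c f v = f (PathE v) + sum f (ex c v)"
definition Sset :: "nat \<Rightarrow> (nat \<Rightarrow> nat) \<Rightarrow> (nat \<Rightarrow> nat) \<Rightarrow> nat \<Rightarrow> nat \<Rightarrow> (pedge \<Rightarrow> int) set" where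
  "Sset n c b k s = {f. (\<forall>e. e \<notin> Eg n c k \<longrightarrow> f e = 0) \<and> (\<forall>e\<in>Eg n c k. 0 \<le> f e) \<and>
     (\<forall>v\<in>{k..n+1}. outs c f v = int (b v) + (if v = k then int s else f (PathE (v - 1))))}"

lemma mem_Pi [simp]:
  "PathE i \<in> Pi_edges n c \<longleftrightarrow> 1 \<le> i \<and> i \<le> n + 1"
  "ExtraE i j \<in> Pi_edges n c \<longleftrightarrow> 1 \<le> i \<and> i \<le> n + 1 \<and> j < c i"
  by (auto simp: Pi_edges_def)

lemma mem_Eg [simp]:
  "PathE i \<in> Eg n c k \<longleftrightarrow> 1 \<le> i \<and> i \<le> n + 1 \<and> k \<le> i"
  "ExtraE i j \<in> Eg n c k \<longleftrightarrow> 1 \<le> i \<and> i \<le> n + 1 \<and> j < c i \<and> k \<le> i"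
  by (auto simp: Eg_def)

lemma mem_ex [simp]:
  "PathE i \<notin> ex c k"
  "ExtraE i j \<in> ex c k \<longleftrightarrow> i = k \<and> j < c k"
  by (auto simp: ex_def)

lemma ex_fin [simp]: "finite (ex c k)" by (simp add: ex_def)
lemma ex_card [simp]: "card (ex c k) = c k"
  by (simp add: ex_def card_image inj_on_def)

lemma tail_set: "v \<in> {1..n+1} \<Longrightarrow> {e \<in> Pi_edges n c. Pi_tail e = v} = insert (PathE v) (ex c v)"
proof -
  assume v: "v \<in> {1..n+1}"
  show ?thesis
  proof (intro set_eqI iffI)
    fix e assume "e \<in> {e \<in> Pi_edges n c. Pi_tail e = v}"
    then show "e \<in> insert (PathE v) (ex c v)" using v by (cases e) auto
  next
    fix e assume "e \<in> insert (PathE v) (ex c v)"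
    then show "e \<in> {e \<in> Pi_edges n c. Pi_tail e = v}" using v by (auto simp: ex_def)
  qed
qed

lemma head_set: "v \<in> {1..n+1} \<Longrightarrow> {e \<in> Pi_edges n c. Pi_head n e = v} = (if v = 1 then {} else {PathE (v - 1)})"
proof -
  assume v: "v \<in> {1..n+1}"
  show ?thesis
  proof (intro set_eqI iffI)
    fix e assume "e \<in> {e \<in> Pi_edges n c. Pi_head n e = v}"
    then show "e \<in> (if v = 1 then {} else {PathE (v - 1)})" using v by (cases e) auto
  next
    fix e assume "e \<in> (if v = 1 then {} else {PathE (v - 1)})"
    then show "e \<in> {e \<in> Pi_edges n c. Pi_head n e = v}" using v by (cases "v = 1") auto
  qed
qed

lemma netflow_eq: "v \<in> {1..n+1} \<Longrightarrow>
  netflow (Pi_edges n c) Pi_tail (Pi_head n) f v = outs c f v - (if v = 1 then 0 else f (PathE (v - 1)))"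
  unfolding netflow_def tail_set head_set outs_def by (simp add: sum.insert)

lemma Eg1: "Eg n c 1 = Pi_edges n c"
  by (auto simp: Eg_def Pi_edges_def)

lemma flows_eq: "integer_flows (Pi_edges n c) Pi_tail (Pi_head n) (n + 2) (\<lambda>k. int (b k)) = Sset n c b 1 0"
proof -
  have r: "{1..<n+2} = {1..n+1}" by auto
  have "(\<forall>k\<in>{1..<n + 2}. netflow (Pi_edges n c) Pi_tail (Pi_head n) f k = int (b k)) =
        (\<forall>v\<in>{1..n + 1}. outs c f v = int (b v) + (if v = 1 then int 0 else f (PathE (v - 1))))" for f
    unfolding r by (auto simp: netflow_eq)
  then show ?thesis unfolding integer_flows_def Sset_def Eg1 by auto
qed

lemma Eg_top: "Eg n c (n + 2) = {}"
  by (auto simp: Eg_def Pi_edges_def)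

lemma Sset_top: "Sset n c b (n + 2) s = {\<lambda>_. 0}"
  unfolding Sset_def Eg_top by auto

lemma Eg_split: "k \<in> {1..n+1} \<Longrightarrow> e \<in> Eg n c k \<longleftrightarrow> e = PathE k \<or> e \<in> ex c k \<or> e \<in> Eg n c (Suc k)"
proof (cases e)
  case (ExtraE i j)
  assume k: "k \<in> {1..n+1}"
  show ?thesis using k unfolding ExtraE by (cases "i = k") auto
qed auto

lemma ex_not_Eg: "e \<in> ex c k \<Longrightarrow> e \<notin> Eg n c (Suc k)"
  by (auto simp: ex_def)

lemma ex_sub_Eg: "k \<in> {1..n+1} \<Longrightarrow> e \<in> ex c k \<Longrightarrow> e \<in> Eg n c k"
  by (auto simp: ex_def)

lemma outs_cong: "f (PathE v) = g (PathE v) \<Longrightarrow> (\<And>e. e \<in> ex c v \<Longrightarrow> f e = g e) \<Longrightarrow> outs c f v = outs c g v"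
  unfolding outs_def by (auto intro: sum.cong)

lemma T_bij:
  assumes k: "k \<in> {1..n+1}" and x: "x \<le> s + b k"
  shows "bij_betw (\<lambda>f. (\<lambda>e. if e \<in> ex c k then f e else 0, \<lambda>e. if e \<in> Eg n c (Suc k) then f e else 0))
     {f \<in> Sset n c b k s. f (PathE k) = int x}
     (sb (ex c k) (int (s + b k - x)) \<times> Sset n c b (Suc k) x)"
proof (rule bij_betw_byWitness[where f' = "\<lambda>(h, g). (\<lambda>e. if e = PathE k then int x else h e + g e)"])
  let ?A = "{f \<in> Sset n c b k s. f (PathE k) = int x}"
  let ?B = "sb (ex c k) (int (s + b k - x)) \<times> Sset n c b (Suc k) x"
  let ?phi = "\<lambda>f. (\<lambda>e. if e \<in> ex c k then f e else 0, \<lambda>e. if e \<in> Eg n c (Suc k) then f e else 0)"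
  let ?psi = "\<lambda>(h, g). (\<lambda>e. if e = PathE k then int x else h e + g e)"
  have pk1: "PathE k \<notin> Eg n c (Suc k)" by simp
  show "\<forall>f\<in>?A. ?psi (?phi f) = f"
  proof
    fix f assume f: "f \<in> ?A"
    show "?psi (?phi f) = f"
    proof
      fix e show "?psi (?phi f) e = f e"
        using f Eg_split[OF k, of e] ex_not_Eg[of e c k n] by (auto simp: Sset_def)
    qed
  qed
  show "\<forall>y\<in>?B. ?phi (?psi y) = y"
  proof
    fix y assume y: "y \<in> ?B"
    obtain h g where hg: "y = (h, g)" by (cases y)
    have h0: "\<And>e. e \<notin> ex c k \<Longrightarrow> h e = 0" and g0: "\<And>e. e \<notin> Eg n c (Suc k) \<Longrightarrow> g e = 0"
      using y hg by (auto simp: sb_def Sset_def)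
    have a: "(\<lambda>e. if e \<in> ex c k then ?psi (h, g) e else 0) = h"
    proof
      fix e show "(if e \<in> ex c k then ?psi (h, g) e else 0) = h e"
        using h0 g0 ex_not_Eg[of e c k n] by auto
    qed
    have b: "(\<lambda>e. if e \<in> Eg n c (Suc k) then ?psi (h, g) e else 0) = g"
    proof
      fix e show "(if e \<in> Eg n c (Suc k) then ?psi (h, g) e else 0) = g e"
        using h0[of e] g0[of e] ex_not_Eg[of e c k n] by (cases "e \<in> ex c k") auto
    qed
    show "?phi (?psi y) = y" unfolding hg using a b by simp
  qed
  show "?phi ` ?A \<subseteq> ?B"
  proof
    fix y assume "y \<in> ?phi ` ?A"
    then obtain f where f: "f \<in> Sset n c b k s" and fx: "f (PathE k) = int x" and yf: "y = ?phi f" by blast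
    have z: "\<And>e. e \<notin> Eg n c k \<Longrightarrow> f e = 0" and nn: "\<And>e. e \<in> Eg n c k \<Longrightarrow> 0 \<le> f e"
      and cond: "\<And>v. v \<in> {k..n+1} \<Longrightarrow> outs c f v = int (b v) + (if v = k then int s else f (PathE (v - 1)))"
      using f by (auto simp: Sset_def)
    have ok: "outs c f k = int (b k) + int s" using cond[of k] k by auto
    have sh: "sum (\<lambda>e. if e \<in> ex c k then f e else 0) (ex c k) = sum f (ex c k)" by (rule sum.cong) auto
    have hpart: "(\<lambda>e. if e \<in> ex c k then f e else 0) \<in> sb (ex c k) (int (s + b k - x))"
      unfolding sb_def using sh ok fx x nn ex_sub_Eg[OF k] by (auto simp: outs_def)
    have gpart: "(\<lambda>e. if e \<in> Eg n c (Suc k) then f e else 0) \<in> Sset n c b (Suc k) x"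
      unfolding Sset_def
    proof (intro CollectI conjI ballI allI impI)
      fix e assume "e \<in> Eg n c (Suc k)" then show "0 \<le> (if e \<in> Eg n c (Suc k) then f e else 0)"
        using nn Eg_split[OF k, of e] by auto
    next
      fix v assume v: "v \<in> {Suc k..n+1}"
      have "outs c (\<lambda>e. if e \<in> Eg n c (Suc k) then f e else 0) v = outs c f v"
        by (rule outs_cong) (use v in \<open>auto simp: ex_def\<close>)
      also have "\<dots> = int (b v) + f (PathE (v - 1))" using cond[of v] v by auto
      finally show "outs c (\<lambda>e. if e \<in> Eg n c (Suc k) then f e else 0) v =
        int (b v) + (if v = Suc k then int x else (if PathE (v - 1) \<in> Eg n c (Suc k) then f (PathE (v - 1)) else 0))"
        using v fx by auto
    qed auto
    show "y \<in> ?B" unfolding yf using hpart gpart by simp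
  qed
  show "?psi ` ?B \<subseteq> ?A"
  proof
    fix y assume "y \<in> ?psi ` ?B"
    then obtain h g where h: "h \<in> sb (ex c k) (int (s + b k - x))" and g: "g \<in> Sset n c b (Suc k) x"
      and yhg: "y = ?psi (h, g)" by blast
    have h0: "\<And>e. e \<notin> ex c k \<Longrightarrow> h e = 0" and hnn: "\<And>e. 0 \<le> h e" and hs: "sum h (ex c k) = int (s + b k - x)"
      using h by (auto simp: sb_def)
    have g0: "\<And>e. e \<notin> Eg n c (Suc k) \<Longrightarrow> g e = 0" and gnn: "\<And>e. 0 \<le> g e"
      and gc: "\<And>v. v \<in> {Suc k..n+1} \<Longrightarrow> outs c g v = int (b v) + (if v = Suc k then int x else g (PathE (v - 1)))"
      using g by (auto simp: Sset_def)
    let ?f = "\<lambda>e. if e = PathE k then int x else h e + g e"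
    have "?f \<in> Sset n c b k s"
      unfolding Sset_def
    proof (intro CollectI conjI ballI allI impI)
      fix e assume "e \<notin> Eg n c k" then show "?f e = 0"
        using Eg_split[OF k, of e] h0 g0 by auto
    next
      fix e show "0 \<le> ?f e" using hnn gnn by (simp add: add_nonneg_nonneg)
    next
      fix v assume v: "v \<in> {k..n+1}"
      show "outs c ?f v = int (b v) + (if v = k then int s else ?f (PathE (v - 1)))"
      proof (cases "v = k")
        case True
        have "sum ?f (ex c k) = sum h (ex c k)"
          by (rule sum.cong) (use g0 ex_not_Eg in auto)
        then show ?thesis using True hs x by (simp add: outs_def)
      next
        case False
        then have v1: "v \<in> {Suc k..n+1}" using v by auto
        have "outs c ?f v = outs c g v"
          by (rule outs_cong) (use False h0 in \<open>auto simp: ex_def\<close>)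
        also have "\<dots> = int (b v) + (if v = Suc k then int x else g (PathE (v - 1)))" using gc[OF v1] .
        also have "\<dots> = int (b v) + ?f (PathE (v - 1))" using False v1 h0 by auto
        finally show ?thesis using False by simp
      qed
    qed
    then show "y \<in> ?A" unfolding yhg by simp
  qed
qed

lemma Sset_step:
  assumes k: "k \<in> {1..n+1}" and fin: "\<And>x. finite (Sset n c b (Suc k) x)"
  shows "finite (Sset n c b k s) \<and>
    card (Sset n c b k s) = (\<Sum>x\<le>s + b k. mc (c k) (s + b k - x) * card (Sset n c b (Suc k) x))"
proof -
  let ?M = "s + b k"
  let ?T = "\<lambda>x. {f \<in> Sset n c b k s. f (PathE k) = int x}"
  have eq: "Sset n c b k s = (\<Union>x\<le>?M. ?T x)"
  proof
    show "Sset n c b k s \<subseteq> (\<Union>x\<le>?M. ?T x)"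
    proof
      fix f assume f: "f \<in> Sset n c b k s"
      have nn: "\<And>e. e \<in> Eg n c k \<Longrightarrow> 0 \<le> f e" and cond: "outs c f k = int (b k) + int s"
        using f k by (auto simp: Sset_def)
      have p0: "0 \<le> f (PathE k)" using nn k by auto
      have "0 \<le> sum f (ex c k)" using nn ex_sub_Eg[OF k] by (auto intro: sum_nonneg)
      then have le: "nat (f (PathE k)) \<le> ?M" using cond by (simp add: outs_def)
      have "f \<in> ?T (nat (f (PathE k)))" using f p0 by simp
      then show "f \<in> (\<Union>x\<le>?M. ?T x)" using le by blast
    qed
  qed auto
  have cT: "finite (?T x) \<and> card (?T x) = mc (c k) (?M - x) * card (Sset n c b (Suc k) x)" if x: "x \<le> ?M" for x
  proof -
    note bj = T_bij[where k=k and n=n and x=x and s=s and b=b and c=c, OF k x]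
    have sbc: "finite (sb (ex c k) (int (?M - x))) \<and> card (sb (ex c k) (int (?M - x))) = mc (c k) (?M - x)"
      using sb_card[of "ex c k" "?M - x"] by simp
    have f2: "finite (sb (ex c k) (int (?M - x)) \<times> Sset n c b (Suc k) x)" using sbc fin by auto
    show ?thesis using bij_betw_same_card[OF bj] bij_betw_finite[OF bj] f2 sbc
      by (simp add: card_cartesian_product)
  qed
  have disj: "\<forall>x1\<in>{..?M}. \<forall>x2\<in>{..?M}. x1 \<noteq> x2 \<longrightarrow> ?T x1 \<inter> ?T x2 = {}" by auto
  have "card (Sset n c b k s) = card (\<Union>x\<le>?M. ?T x)" using eq by (rule arg_cong)
  also have "\<dots> = (\<Sum>x\<le>?M. card (?T x))"
    by (rule card_UN_disjoint[OF finite_atMost]) (use cT disj in auto)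
  also have "\<dots> = (\<Sum>x\<le>?M. mc (c k) (?M - x) * card (Sset n c b (Suc k) x))"
    using cT by (intro sum.cong) auto
  moreover have "finite (\<Union>x\<le>?M. ?T x)" using cT by auto
  ultimately show ?thesis using eq by simp
qed

fun mm :: "nat \<Rightarrow> (nat \<Rightarrow> nat) \<Rightarrow> nat \<Rightarrow> nat" where
  "mm n c 0 = 0"
| "mm n c (Suc d) = mm n c d + c (n + 1 - d)"

fun bet :: "nat \<Rightarrow> (nat \<Rightarrow> nat) \<Rightarrow> (nat \<Rightarrow> nat) \<Rightarrow> nat \<Rightarrow> nat \<Rightarrow> real poly" where
  "bet n c a 0 = (\<lambda>l. if l = 0 then 1 else 0)"
| "bet n c a (Suc d) = stepb (bet n c a d) (mm n c d) (c (n + 1 - d)) (a (n + 1 - d))"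

lemma bet_Inv: "\<exists>D. Inv (bet n c a d) (mm n c d) D"
proof (induction d)
  case 0
  have "Inv (bet n c a 0) (mm n c 0) 0" by (auto simp: Inv_def nn_def coeff_1)
  then show ?case by blast
next
  case (Suc d)
  then obtain D where "Inv (bet n c a d) (mm n c d) D" by blast
  from Inv_step[OF this] show ?case by simp
qed

lemma mc_swapS: "mc (Suc p) q = mc (Suc q) p" using mc_swap[of p q] by simp

lemma alg_step:
  fixes \<beta> :: "nat \<Rightarrow> real poly" and T :: real
  assumes T: "T = real t" and MM: "M = s + t * a"
  shows "(\<Sum>x\<le>M. real (mc c' (M - x)) * (\<Sum>i\<le>m. poly (\<beta> i) T * real (mc (x + 1) i)))
     = (\<Sum>l\<le>m + c'. poly (stepb \<beta> m c' a l) T * real (mc (s + 1) l))"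
proof -
  have "(\<Sum>x\<le>M. real (mc c' (M - x)) * (\<Sum>i\<le>m. poly (\<beta> i) T * real (mc (x + 1) i)))
      = (\<Sum>x\<le>M. \<Sum>i\<le>m. poly (\<beta> i) T * (real (mc (i + 1) x) * real (mc c' (M - x))))"
    by (simp add: sum_distrib_left mc_swapS mult_ac)
  also have "\<dots> = (\<Sum>i\<le>m. poly (\<beta> i) T * (\<Sum>x\<le>M. real (mc (i + 1) x * mc c' (M - x))))"
    by (subst sum.swap) (simp add: sum_distrib_left)
  also have "\<dots> = (\<Sum>i\<le>m. poly (\<beta> i) T * real (mc (i + 1 + c') M))"
    by (simp only: of_nat_sum[symmetric] mc_vandermonde)
  also have "\<dots> = (\<Sum>i\<le>m. \<Sum>l\<le>c' + i. poly (\<beta> i) T * (real (mc (s + 1) l) * poly (mp a (c' + i - l)) T))"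
  proof (rule sum.cong[OF refl])
    fix i
    have "mc (i + 1 + c') M = mc ((c' + i) + 1) M" by (simp add: add_ac)
    also have "\<dots> = mc (M + 1) (c' + i)" by (rule mc_swap)
    also have "\<dots> = mc ((s + 1) + t * a) (c' + i)" using MM by (simp add: add_ac)
    also have "\<dots> = (\<Sum>l\<le>c' + i. mc (s + 1) l * mc (t * a) (c' + i - l))"
      by (rule mc_vandermonde[symmetric])
    finally have "real (mc (i + 1 + c') M) = (\<Sum>l\<le>c' + i. real (mc (s + 1) l) * poly (mp a (c' + i - l)) T)"
      by (simp add: mp_poly T mult.commute[of t a])
    then show "poly (\<beta> i) T * real (mc (i + 1 + c') M) = (\<Sum>l\<le>c' + i. poly (\<beta> i) T * (real (mc (s + 1) l) * poly (mp a (c' + i - l)) T))"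
      by (simp add: sum_distrib_left)
  qed
  also have "\<dots> = (\<Sum>i\<le>m. \<Sum>l\<le>m + c'. if l \<le> c' + i then poly (\<beta> i) T * (real (mc (s + 1) l) * poly (mp a (c' + i - l)) T) else 0)"
  proof (rule sum.cong[OF refl])
    fix i assume i: "i \<in> {..m}"
    show "(\<Sum>l\<le>c' + i. poly (\<beta> i) T * (real (mc (s + 1) l) * poly (mp a (c' + i - l)) T)) =
      (\<Sum>l\<le>m + c'. if l \<le> c' + i then poly (\<beta> i) T * (real (mc (s + 1) l) * poly (mp a (c' + i - l)) T) else 0)"
      using i by (intro sum.mono_neutral_cong_left) auto
  qed
  also have "\<dots> = (\<Sum>l\<le>m + c'. \<Sum>i\<le>m. if l \<le> c' + i then poly (\<beta> i) T * (real (mc (s + 1) l) * poly (mp a (c' + i - l)) T) else 0)"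
    by (rule sum.swap)
  also have "\<dots> = (\<Sum>l\<le>m + c'. poly (stepb \<beta> m c' a l) T * real (mc (s + 1) l))"
  proof (rule sum.cong[OF refl])
    fix l
    show "(\<Sum>i\<le>m. if l \<le> c' + i then poly (\<beta> i) T * (real (mc (s + 1) l) * poly (mp a (c' + i - l)) T) else 0)
      = poly (stepb \<beta> m c' a l) T * real (mc (s + 1) l)"
      unfolding stepb_def poly_sum sum_distrib_right
      by (rule sum.cong[OF refl]) auto
  qed
  finally show ?thesis .
qed

lemma mc_0r [simp]: "mc u 0 = 1" by (simp add: mc_def)

lemma count_main:
  "d \<le> n + 1 \<Longrightarrow> finite (Sset n c (\<lambda>k. t * a k) (n + 2 - d) s) \<and>
     real (card (Sset n c (\<lambda>k. t * a k) (n + 2 - d) s)) = (\<Sum>l\<le>mm n c d. poly (bet n c a d l) (real t) * real (mc (s + 1) l))"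
proof (induction d arbitrary: s)
  case 0
  have "Sset n c (\<lambda>k. t * a k) (n + 2 - 0) s = {\<lambda>_. 0}" using Sset_top by simp
  then show ?case by simp
next
  case (Suc d)
  define k where "k = n + 1 - d"
  have k: "k \<in> {1..n+1}" using Suc.prems by (auto simp: k_def)
  have k1: "n + 2 - d = Suc k" and k2: "n + 2 - Suc d = k" using Suc.prems by (auto simp: k_def)
  have IH: "finite (Sset n c (\<lambda>k. t * a k) (Suc k) x) \<and>
     real (card (Sset n c (\<lambda>k. t * a k) (Suc k) x)) = (\<Sum>l\<le>mm n c d. poly (bet n c a d l) (real t) * real (mc (x + 1) l))" for x
    using Suc.IH[of x] Suc.prems k1 by simp
  note st = Sset_step[OF k, of c "\<lambda>k. t * a k" s, OF conjunct1[OF IH]]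
  have "real (card (Sset n c (\<lambda>k. t * a k) k s)) =
     (\<Sum>x\<le>s + t * a k. real (mc (c k) (s + t * a k - x)) * (\<Sum>l\<le>mm n c d. poly (bet n c a d l) (real t) * real (mc (x + 1) l)))"
    using st IH by simp
  also have "\<dots> = (\<Sum>l\<le>mm n c d + c k. poly (stepb (bet n c a d) (mm n c d) (c k) (a k) l) (real t) * real (mc (s + 1) l))"
    by (rule alg_step) auto
  finally show ?case using st k2 by (simp add: k_def)
qed

theorem corollary6p20:
  fixes n :: nat and c :: "nat \<Rightarrow> nat" and a :: "nat \<Rightarrow> nat"
  shows "\<exists>p :: real poly.
     (\<forall>t :: nat. real (K_flow (Pi_edges n c) Pi_tail (Pi_head n) (n + 2)
                         (\<lambda>k. int t * int (a k))) = poly p (real t))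
     \<and> (\<forall>i \<le> degree p. coeff p i > 0)"
proof -
  define p where "p = (\<Sum>l\<le>mm n c (n + 1). bet n c a (n + 1) l)"
  have A: "real (K_flow (Pi_edges n c) Pi_tail (Pi_head n) (n + 2) (\<lambda>k. int t * int (a k))) = poly p (real t)" for t
  proof -
    have e: "(\<lambda>k. int t * int (a k)) = (\<lambda>k. int (t * a k))" by simp
    have "K_flow (Pi_edges n c) Pi_tail (Pi_head n) (n + 2) (\<lambda>k. int t * int (a k))
        = card (Sset n c (\<lambda>k. t * a k) (n + 2 - (n + 1)) 0)"
      unfolding K_flow_def e flows_eq by simp
    then show ?thesis
      using count_main[of "n + 1" n c t a 0] by (simp add: poly_sum p_def)
  qed
  obtain D where "Inv (bet n c a (n + 1)) (mm n c (n + 1)) D" using bet_Inv by blast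
  from Inv_final[OF this] have B: "\<forall>i \<le> degree p. coeff p i > 0" unfolding p_def .
  show ?thesis using A B by blast
qed

end
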